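(* Let $R$ be a commutative ring and let $0\to A\xrightarrow{f}B\xrightarrow{g}C\to 0$ be an exact sequence of $R$-modules. This sequence is $w$-split if and only if there exist $J=\langle d_1,\dots,d_n\rangle\in\mathrm{GV}(R)$ and $q_1,\dots,q_n\in\mathrm{Hom}_R(B,A)$ such that $q_kf=\eta^A_{d_k}$ for all $k=1,\dots,n$. Moreover, suppose $J=\langle d_1,\dots,d_n\rangle\in\mathrm{GV}(R)$ and $h_1,\dots,h_n\in\mathrm{Hom}_R(C,B)$ satisfy $gh_k=\eta^C_{d_k}$ for all $k$. Then there exist $q_k\in\mathrm{Hom}_R(B,A)$ with $q_kf=\eta^A_{d_k}$ and $\eta^B_{d_k}=fq_k+h_kg$ for each $k$.
   Context: $R$ is a commutative ring with identity. For an $R$-module $M$ and $s\in R$, $\eta^M_s:M\to M$ is multiplication by $s$. An ideal $J$ of $R$ is a GV-ideal if $J$ is finitely generated and the natural map $R\to\mathrm{Hom}_R(J,R)$ is an isomorphism; $\mathrm{GV}(R)$ is the set of GV-ideals. A short exact sequence $0\to A\xrightarrow{f}B\xrightarrow{g}C\to 0$ is $w$-split if there exist $J=\langle d_1,\dots,d_n\rangle\in\mathrm{GV}(R)$ and $h_1,\dots,h_n\in\mathrm{Hom}_R(C,B)$ with $gh_k=\eta^C_{d_k}$ for all $k$. *)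

theory Defs
  imports Main "HOL.Modules"
begin

text \<open>R is modelled by a type 'r of class comm_ring_1; an R-module is a type of class
ab_group_add together with a scalar multiplication satisfying the locale module.
A finite list ds = [d_1,...,d_n] of ring elements represents the generators of J.\<close>

definition gen_ideal :: "'r::comm_ring_1 list \<Rightarrow> 'r set" where
  "gen_ideal ds = {x. \<exists>c::nat \<Rightarrow> 'r. x = (\<Sum>i<length ds. c i * ds ! i)}"

definition ideal_hom_to_ring :: "'r::comm_ring_1 set \<Rightarrow> ('r \<Rightarrow> 'r) \<Rightarrow> bool" where
  "ideal_hom_to_ring J \<phi> \<longleftrightarrow>
     (\<forall>x\<in>J. \<forall>y\<in>J. \<phi> (x + y) = \<phi> x + \<phi> y) \<and> (\<forall>r. \<forall>x\<in>J. \<phi> (r * x) = r * \<phi> x)"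

text \<open>J = <ds> is a GV-ideal: the natural map R \<rightarrow> Hom_R(J,R), r \<mapsto> (x \<mapsto> r x),
is bijective (injective and surjective onto Hom_R(J,R)); J is finitely generated by construction.\<close>
definition GV_ideal :: "'r::comm_ring_1 list \<Rightarrow> bool" where
  "GV_ideal ds \<longleftrightarrow>
     (\<forall>r s. (\<forall>x\<in>gen_ideal ds. r * x = s * x) \<longrightarrow> r = s) \<and>
     (\<forall>\<phi>. ideal_hom_to_ring (gen_ideal ds) \<phi> \<longrightarrow> (\<exists>r. \<forall>x\<in>gen_ideal ds. \<phi> x = r * x))"

definition short_exact ::
  "('r::comm_ring_1 \<Rightarrow> 'a::ab_group_add \<Rightarrow> 'a) \<Rightarrow> ('r::comm_ring_1 \<Rightarrow> 'b::ab_group_add \<Rightarrow> 'b) \<Rightarrow>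
   ('r::comm_ring_1 \<Rightarrow> 'c::ab_group_add \<Rightarrow> 'c) \<Rightarrow> ('a \<Rightarrow> 'b) \<Rightarrow> ('b \<Rightarrow> 'c) \<Rightarrow> bool" where
  "short_exact sA sB sC f g \<longleftrightarrow>
     module_hom sA sB f \<and> module_hom sB sC g \<and> inj f \<and> surj g \<and> range f = {b. g b = 0}"

definition w_split ::
  "('r::comm_ring_1 \<Rightarrow> 'a::ab_group_add \<Rightarrow> 'a) \<Rightarrow> ('r::comm_ring_1 \<Rightarrow> 'b::ab_group_add \<Rightarrow> 'b) \<Rightarrow>
   ('r::comm_ring_1 \<Rightarrow> 'c::ab_group_add \<Rightarrow> 'c) \<Rightarrow> ('a \<Rightarrow> 'b) \<Rightarrow> ('b \<Rightarrow> 'c) \<Rightarrow> bool" where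
  "w_split sA sB sC f g \<longleftrightarrow>
     (\<exists>ds. GV_ideal ds \<and> (\<exists>h :: nat \<Rightarrow> 'c \<Rightarrow> 'b. \<forall>k<length ds.
        module_hom sC sB (h k) \<and> (\<forall>c. g (h k c) = sC (ds ! k) c)))"

end

theory Submission
  imports Defs
begin

lemma sec_to_ret:
  fixes sA :: "'r::comm_ring_1 \<Rightarrow> 'a::ab_group_add \<Rightarrow> 'a"
    and sB :: "'r \<Rightarrow> 'b::ab_group_add \<Rightarrow> 'b"
    and sC :: "'r \<Rightarrow> 'c::ab_group_add \<Rightarrow> 'c"
    and f :: "'a \<Rightarrow> 'b" and g :: "'b \<Rightarrow> 'c"
  assumes mA: "module sA" and mB: "module sB" and mC: "module sC"
    and se: "short_exact sA sB sC f g"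
    and hh: "module_hom sC sB h" and hg: "\<forall>c. g (h c) = sC d c"
  shows "\<exists>q. module_hom sB sA q \<and> (\<forall>a. q (f a) = sA d a) \<and>
               (\<forall>b. sB d b = f (q b) + h (g b))"
proof -
  have fh: "module_hom sA sB f" and gh: "module_hom sB sC g" and inj: "inj f"
    and rg: "range f = {b. g b = 0}" using se by (auto simp: short_exact_def)
  define q where "q b = inv f (sB d b - h (g b))" for b
  have fq: "f (q b) = sB d b - h (g b)" for b
  proof -
    have "g (sB d b - h (g b)) = 0"
      using hg module_hom.diff[OF gh] module_hom.scale[OF gh] by simp
    then have "sB d b - h (g b) \<in> range f" using rg by auto
    then show ?thesis unfolding q_def by (rule f_inv_into_f)
  qed
  have add: "q (x + y) = q x + q y" for x y
  proof -
    have "f (q (x + y)) = f (q x + q y)"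
      unfolding module_hom.add[OF fh] fq module_hom.add[OF gh] module_hom.add[OF hh]
      by (simp add: module.scale_right_distrib[OF mB])
    then show ?thesis using inj by (simp add: inj_eq)
  qed
  have sc: "q (sB r x) = sA r (q x)" for r x
  proof -
    have "f (q (sB r x)) = f (sA r (q x))"
      unfolding module_hom.scale[OF fh] fq module_hom.scale[OF gh] module_hom.scale[OF hh]
      by (simp add: module.scale_right_diff_distrib[OF mB] module.scale_left_commute[OF mB])
    then show ?thesis using inj by (simp add: inj_eq)
  qed
  have qf: "q (f a) = sA d a" for a
  proof -
    have "g (f a) = 0" using rg by auto
    then have "f (q (f a)) = f (sA d a)"
      unfolding fq module_hom.scale[OF fh] by (simp add: module_hom.zero[OF hh])
    then show ?thesis using inj by (simp add: inj_eq)
  qed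
  show ?thesis
    apply (rule exI[of _ q])
    using add sc qf fq mA mB by (auto simp: module_hom_iff)
qed

lemma ret_to_sec:
  fixes sA :: "'r::comm_ring_1 \<Rightarrow> 'a::ab_group_add \<Rightarrow> 'a"
    and sB :: "'r \<Rightarrow> 'b::ab_group_add \<Rightarrow> 'b"
    and sC :: "'r \<Rightarrow> 'c::ab_group_add \<Rightarrow> 'c"
    and f :: "'a \<Rightarrow> 'b" and g :: "'b \<Rightarrow> 'c"
  assumes mA: "module sA" and mB: "module sB" and mC: "module sC"
    and se: "short_exact sA sB sC f g"
    and qh: "module_hom sB sA q" and qf: "\<forall>a. q (f a) = sA d a"
  shows "\<exists>h. module_hom sC sB h \<and> (\<forall>c. g (h c) = sC d c)"
proof -
  have fh: "module_hom sA sB f" and gh: "module_hom sB sC g" and inj: "inj f"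
    and sg: "surj g" and rg: "range f = {b. g b = 0}" using se by (auto simp: short_exact_def)
  define phi where "phi b = sB d b - f (q b)" for b
  have padd: "phi (x + y) = phi x + phi y" for x y
    unfolding phi_def module_hom.add[OF qh] module_hom.add[OF fh]
    by (simp add: module.scale_right_distrib[OF mB])
  have psc: "phi (sB r x) = sB r (phi x)" for r x
    unfolding phi_def module_hom.scale[OF qh] module_hom.scale[OF fh]
    by (simp add: module.scale_right_diff_distrib[OF mB] module.scale_left_commute[OF mB])
  have pdiff: "phi (x - y) = phi x - phi y" for x y
    using padd[of "x - y" y] by (simp add: algebra_simps)
  have pwd: "phi x = phi y" if "g x = g y" for x y
  proof -
    have "g (x - y) = 0" using that module_hom.diff[OF gh] by simp
    then obtain a where "x - y = f a" using rg by (metis (mono_tags, lifting) mem_Collect_eq rangeE)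
    moreover have "phi (f a) = 0" unfolding phi_def using qf module_hom.scale[OF fh] by simp
    ultimately show ?thesis using pdiff[of x y] by simp
  qed
  have gi: "g (inv g c) = c" for c using sg by (simp add: surj_f_inv_f)
  define h where "h c = phi (inv g c)" for c
  have hadd: "h (x + y) = h x + h y" for x y
  proof -
    have "h (x + y) = phi (inv g x + inv g y)"
      unfolding h_def by (rule pwd) (simp add: gi module_hom.add[OF gh])
    then show ?thesis by (simp add: padd h_def)
  qed
  have hsc: "h (sC r x) = sB r (h x)" for r x
  proof -
    have "h (sC r x) = phi (sB r (inv g x))"
      unfolding h_def by (rule pwd) (simp add: gi module_hom.scale[OF gh])
    then show ?thesis by (simp add: psc h_def)
  qed
  have ghc: "g (h c) = sC d c" for c
    unfolding h_def phi_def module_hom.diff[OF gh] module_hom.scale[OF gh] gi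
    using rg by auto
  show ?thesis
    apply (rule exI[of _ h])
    using hadd hsc ghc mC mB by (auto simp: module_hom_iff)
qed

theorem proposition2p3:
  fixes sA :: "'r::comm_ring_1 \<Rightarrow> 'a::ab_group_add \<Rightarrow> 'a"
    and sB :: "'r \<Rightarrow> 'b::ab_group_add \<Rightarrow> 'b"
    and sC :: "'r \<Rightarrow> 'c::ab_group_add \<Rightarrow> 'c"
    and f :: "'a \<Rightarrow> 'b" and g :: "'b \<Rightarrow> 'c"
  assumes "module sA" and "module sB" and "module sC"
    and "short_exact sA sB sC f g"
  shows "(w_split sA sB sC f g \<longleftrightarrow>
           (\<exists>ds. GV_ideal ds \<and> (\<exists>q :: nat \<Rightarrow> 'b \<Rightarrow> 'a. \<forall>k<length ds.
              module_hom sB sA (q k) \<and> (\<forall>a. q k (f a) = sA (ds ! k) a))))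
       \<and> (\<forall>ds (h :: nat \<Rightarrow> 'c \<Rightarrow> 'b). GV_ideal ds \<and>
            (\<forall>k<length ds. module_hom sC sB (h k) \<and> (\<forall>c. g (h k c) = sC (ds ! k) c)) \<longrightarrow>
            (\<exists>q :: nat \<Rightarrow> 'b \<Rightarrow> 'a. \<forall>k<length ds.
               module_hom sB sA (q k) \<and> (\<forall>a. q k (f a) = sA (ds ! k) a) \<and>
               (\<forall>b. sB (ds ! k) b = f (q k b) + h k (g b))))"
proof -
  have P2: "\<exists>q :: nat \<Rightarrow> 'b \<Rightarrow> 'a. \<forall>k<length ds.
               module_hom sB sA (q k) \<and> (\<forall>a. q k (f a) = sA (ds ! k) a) \<and>
               (\<forall>b. sB (ds ! k) b = f (q k b) + h k (g b))"
    if "\<forall>k<length ds. module_hom sC sB (h k) \<and> (\<forall>c. g (h k c) = sC (ds ! k) c)"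
    for ds and h :: "nat \<Rightarrow> 'c \<Rightarrow> 'b"
  proof -
    have "\<forall>k. \<exists>q. k < length ds \<longrightarrow> module_hom sB sA q \<and> (\<forall>a. q (f a) = sA (ds ! k) a) \<and>
               (\<forall>b. sB (ds ! k) b = f (q b) + h k (g b))"
      using sec_to_ret[OF assms] that by blast
    then show ?thesis by metis
  qed
  have P1: "\<exists>h :: nat \<Rightarrow> 'c \<Rightarrow> 'b. \<forall>k<length ds.
        module_hom sC sB (h k) \<and> (\<forall>c. g (h k c) = sC (ds ! k) c)"
    if "\<forall>k<length ds. module_hom sB sA (q k) \<and> (\<forall>a. q k (f a) = sA (ds ! k) a)"
    for ds and q :: "nat \<Rightarrow> 'b \<Rightarrow> 'a"
  proof -
    have "\<forall>k. \<exists>h. k < length ds \<longrightarrow> module_hom sC sB h \<and> (\<forall>c. g (h c) = sC (ds ! k) c)"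
      using ret_to_sec[OF assms] that by blast
    then show ?thesis by metis
  qed
  have L: "w_split sA sB sC f g \<Longrightarrow>
           (\<exists>ds. GV_ideal ds \<and> (\<exists>q :: nat \<Rightarrow> 'b \<Rightarrow> 'a. \<forall>k<length ds.
              module_hom sB sA (q k) \<and> (\<forall>a. q k (f a) = sA (ds ! k) a)))"
  proof -
    assume "w_split sA sB sC f g"
    then obtain ds and h :: "nat \<Rightarrow> 'c \<Rightarrow> 'b" where d: "GV_ideal ds"
      and hk: "\<forall>k<length ds. module_hom sC sB (h k) \<and> (\<forall>c. g (h k c) = sC (ds ! k) c)"
      unfolding w_split_def by blast
    obtain q :: "nat \<Rightarrow> 'b \<Rightarrow> 'a" where "\<forall>k<length ds.
               module_hom sB sA (q k) \<and> (\<forall>a. q k (f a) = sA (ds ! k) a) \<and>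
               (\<forall>b. sB (ds ! k) b = f (q k b) + h k (g b))" using P2[OF hk] by blast
    then show ?thesis using d by blast
  qed
  have R: "w_split sA sB sC f g" if ex: "\<exists>ds. GV_ideal ds \<and> (\<exists>q :: nat \<Rightarrow> 'b \<Rightarrow> 'a. \<forall>k<length ds.
              module_hom sB sA (q k) \<and> (\<forall>a. q k (f a) = sA (ds ! k) a))"
  proof -
    obtain ds and q :: "nat \<Rightarrow> 'b \<Rightarrow> 'a" where d: "GV_ideal ds"
      and qk: "\<forall>k<length ds. module_hom sB sA (q k) \<and> (\<forall>a. q k (f a) = sA (ds ! k) a)"
      using ex by blast
    show ?thesis unfolding w_split_def using d P1[OF qk] by blast
  qed
  show ?thesis using L R P2 by blast
qed

end
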